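(* Let $g$ be a locally Lipschitz function on $\mathbb{R}$ and suppose there is a separately convex function $h$ on $\mathbb{R}^2$ such that $g(t)=h(t,t)$ for every $t\in\mathbb{R}$. Then for every bounded interval $I\subset\mathbb{R}$ there is a constant $C^*(g,I)$ such that $$-\int_0^1\frac{\omega^*_g(x,t)}{t^2}\,dt<C^*(g,I)$$ for every $x\in I$.
   Context: A function $h:\mathbb{R}^2\to\mathbb{R}$ is called separately convex if it is convex on every line parallel to a coordinate axis. For a real function $g$ on $\mathbb{R}$, $\omega_g(x,t):=g(x+t)+g(x-t)-2g(x)$, and for $t\ge0$, $\omega^*_g(x,\cdot)$ is defined as the greatest non-increasing minorant of $\omega_g(x,\cdot)$ on $[0,\infty)$. *)

theory Defs
  imports "HOL-Analysis.Analysis"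
begin

definition separately_convex :: "(real \<times> real \<Rightarrow> real) \<Rightarrow> bool" where
  "separately_convex h \<longleftrightarrow>
     (\<forall>y. convex_on UNIV (\<lambda>x. h (x, y))) \<and> (\<forall>x. convex_on UNIV (\<lambda>y. h (x, y)))"

definition locally_lipschitz :: "(real \<Rightarrow> real) \<Rightarrow> bool" where
  "locally_lipschitz g \<longleftrightarrow>
     (\<forall>x. \<exists>U L. open U \<and> x \<in> U \<and> L-lipschitz_on U g)"

definition omega :: "(real \<Rightarrow> real) \<Rightarrow> real \<Rightarrow> real \<Rightarrow> real" where
  "omega g x t = g (x + t) + g (x - t) - 2 * g x"

text \<open>Greatest non-increasing minorant of omega g x on [0, infinity), taken pointwise as the
  supremum of the values of all non-increasing minorants (for t >= 0).\<close>
definition omega_star :: "(real \<Rightarrow> real) \<Rightarrow> real \<Rightarrow> real \<Rightarrow> real" where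
  "omega_star g x t = Sup {\<phi> t | \<phi>. antimono_on {0..} \<phi> \<and> (\<forall>s\<ge>0. \<phi> s \<le> omega g x s)}"

end

theory Submission
  imports Defs "HOL-Analysis.Analysis"
begin

lemma conv3:
  fixes f :: "real \<Rightarrow> real"
  assumes "convex_on UNIV f" "a \<le> b" "b \<le> c" "a < c"
  shows "(c - a) * f b \<le> (c - b) * f a + (b - a) * f c"
proof -
  define t where "t = (b - a) / (c - a)"
  have t0: "0 \<le> t" and t1: "t \<le> 1" using assms by (auto simp: t_def field_simps)
  have tc: "t * (c - a) = b - a" using assms by (simp add: t_def)
  have bt: "b = (1 - t) *\<^sub>R a + t *\<^sub>R c" using tc by (simp add: algebra_simps)
  have "f b \<le> (1 - t) * f a + t * f c"
    using convex_onD[OF assms(1) t0 t1, of a c] bt by simp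
  then have "(c - a) * f b \<le> (c - a) * ((1 - t) * f a + t * f c)"
    using assms by (intro mult_left_mono) auto
  also have "\<dots> = ((c - a) - t * (c - a)) * f a + (t * (c - a)) * f c" by (simp add: algebra_simps)
  also have "\<dots> = (c - b) * f a + (b - a) * f c" by (simp add: tc)
  finally show ?thesis .
qed

lemma conv3x:
  fixes f :: "real \<Rightarrow> real"
  assumes "convex_on UNIV f" "\<alpha> \<le> \<beta>" "\<beta> \<le> \<gamma>" "\<alpha> < \<gamma>"
  shows "(\<gamma> - \<alpha>) * f (x + \<beta>) \<le> (\<gamma> - \<beta>) * f (x + \<alpha>) + (\<beta> - \<alpha>) * f (x + \<gamma>)"
proof -
  have "((x+\<gamma>) - (x+\<alpha>)) * f (x + \<beta>) \<le> ((x+\<gamma>) - (x+\<beta>)) * f (x + \<alpha>) + ((x+\<beta>) - (x+\<alpha>)) * f (x + \<gamma>)"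
    using assms by (intro conv3) auto
  then show ?thesis by simp
qed

lemma link_alg:
  fixes r \<rho> P Q P' Q' Z W gm gp gM gP g0 :: real
  assumes r: "0 < r" "r < \<rho>"
    and h1: "(\<rho>+r)*P \<le> (\<rho>-r)*gm + 2*r*Z"
    and h2: "2*\<rho>*Z \<le> (\<rho>+r)*P' + (\<rho>-r)*gP"
    and h3: "(\<rho>+r)*Q \<le> 2*r*W + (\<rho>-r)*gp"
    and h4: "2*\<rho>*W \<le> (\<rho>-r)*gM + (\<rho>+r)*Q'"
  shows "(\<rho>+r) * (r*(P'+Q'-2*g0) - \<rho>*(P+Q-2*g0)) \<ge> (\<rho>-r)*(\<rho>*(2*g0-gp-gm) + r*(2*g0-gP-gM))"
proof -
  have a1: "\<rho>*((\<rho>+r)*P) \<le> \<rho>*((\<rho>-r)*gm + 2*r*Z)" using h1 r by (intro mult_left_mono) auto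
  have a2: "r*(2*\<rho>*Z) \<le> r*((\<rho>+r)*P' + (\<rho>-r)*gP)" using h2 r by (intro mult_left_mono) auto
  have a3: "\<rho>*((\<rho>+r)*Q) \<le> \<rho>*(2*r*W + (\<rho>-r)*gp)" using h3 r by (intro mult_left_mono) auto
  have a4: "r*(2*\<rho>*W) \<le> r*((\<rho>-r)*gM + (\<rho>+r)*Q')" using h4 r by (intro mult_left_mono) auto
  show ?thesis using a1 a2 a3 a4 by (simp add: algebra_simps)
qed

lemma link_alg2:
  fixes r \<rho> P Q P' Q' Z W gm gp gM gP g0 :: real
  assumes r: "0 < r" "2*r \<le> \<rho>"
    and h1: "(\<rho>+r)*P \<le> (\<rho>-r)*gm + 2*r*Z"
    and h2: "2*\<rho>*Z \<le> (\<rho>+r)*P' + (\<rho>-r)*gP"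
    and h3: "(\<rho>+r)*Q \<le> 2*r*W + (\<rho>-r)*gp"
    and h4: "2*\<rho>*W \<le> (\<rho>-r)*gM + (\<rho>+r)*Q'"
    and dr: "gp + gm - 2*g0 \<le> 0" and dR: "gP + gM - 2*g0 \<le> 0"
  shows "(2*g0-gp-gm) / (3*r) \<le> (P'+Q'-2*g0)/\<rho> - (P+Q-2*g0)/r"
proof -
  have L: "(\<rho>+r) * (r*(P'+Q'-2*g0) - \<rho>*(P+Q-2*g0)) \<ge> (\<rho>-r)*(\<rho>*(2*g0-gp-gm) + r*(2*g0-gP-gM))"
    using link_alg[OF _ _ h1 h2 h3 h4] r by auto
  have "(\<rho>-r)*(r*(2*g0-gP-gM)) \<ge> 0" using r dR by (intro mult_nonneg_nonneg) auto
  moreover have "(\<rho>-r)*(\<rho>*(2*g0-gp-gm)) \<ge> ((\<rho>+r)/3)*(\<rho>*(2*g0-gp-gm))"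
    using r dr by (intro mult_right_mono) (auto intro: mult_nonneg_nonneg)
  moreover have "((\<rho>+r)/3)*(\<rho>*(2*g0-gp-gm)) = (\<rho>+r) * (\<rho>*(2*g0-gp-gm)/3)" by simp
  moreover have "(\<rho>-r)*(\<rho>*(2*g0-gp-gm) + r*(2*g0-gP-gM)) = (\<rho>-r)*(\<rho>*(2*g0-gp-gm)) + (\<rho>-r)*(r*(2*g0-gP-gM))"
    by (simp add: algebra_simps)
  ultimately have "(\<rho>+r) * (r*(P'+Q'-2*g0) - \<rho>*(P+Q-2*g0)) \<ge> (\<rho>+r) * (\<rho>*(2*g0-gp-gm)/3)"
    using L by linarith
  then have "r*(P'+Q'-2*g0) - \<rho>*(P+Q-2*g0) \<ge> \<rho>*(2*g0-gp-gm)/3"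
    using r by (simp add: mult_le_cancel_left_pos)
  then have "(\<rho>*(2*g0-gp-gm)/3) / (r*\<rho>) \<le> (r*(P'+Q'-2*g0) - \<rho>*(P+Q-2*g0)) / (r*\<rho>)"
    using r by (intro divide_right_mono) auto
  moreover have "(\<rho>*(2*g0-gp-gm)/3) / (r*\<rho>) = (2*g0-gp-gm) / (3*r)" using r by (simp add: field_simps)
  moreover have "(r*(P'+Q'-2*g0) - \<rho>*(P+Q-2*g0)) / (r*\<rho>) = (P'+Q'-2*g0)/\<rho> - (P+Q-2*g0)/r"
    using r by (simp add: field_simps)
  ultimately show ?thesis by simp
qed

lemma geom2: "(\<Sum>k<n. (2::real)^k) = 2^n - 1"
  by (induction n) auto

lemma comb:
  fixes s a :: "nat \<Rightarrow> real" and \<Phi> :: "real \<Rightarrow> real"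
  assumes spos: "\<And>k. k < N \<Longrightarrow> 0 < s k"
  and sle: "\<And>k. k < N \<Longrightarrow> s k \<le> (1/2)^k"
  and anonneg: "\<And>k. k < N \<Longrightarrow> 0 \<le> a k"
  and amono: "\<And>j k. j \<le> k \<Longrightarrow> k < N \<Longrightarrow> a k \<le> a j"
  and Plow: "\<And>k. k < N \<Longrightarrow> B1 \<le> \<Phi> (s k)"
  and link: "\<And>i k. i < N \<Longrightarrow> k < N \<Longrightarrow> s k \<le> s i / 2 \<Longrightarrow> a k / (3 * s k) \<le> \<Phi> (s i) - \<Phi> (s k)"
  shows "j < N \<Longrightarrow> (\<Sum>k\<in>{j..<N}. 2^k * a k) \<le> 4 * (a j / s j) + 12 * (\<Phi> (s j) - B1)"
proof (induction "N - j" arbitrary: j rule: less_induct)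
  case less
  define S where "S = {k. j < k \<and> k < N \<and> s k \<le> s j / 2}"
  have finS: "finite S" unfolding S_def by auto
  define j' where "j' = (if S = {} then N else Min S)"
  have sj: "0 < s j" using spos less by auto
  have jj': "j < j' \<and> j' \<le> N"
  proof (cases "S = {}")
    case True then show ?thesis using less by (simp add: j'_def)
  next
    case False
    then have "Min S \<in> S" using Min_in[OF finS] by auto
    moreover have "j' = Min S" using False by (simp add: j'_def)
    ultimately show ?thesis unfolding S_def by auto
  qed
  have between: "s j / 2 < s k" if "j \<le> k" "k < j'" for k
  proof (cases "k = j")
    case True then show ?thesis using sj by simp
  next
    case False
    then have "k \<notin> S"
      using that finS Min_le[OF finS, of k] by (auto simp: j'_def split: if_splits)
    then show ?thesis using that False jj' by (auto simp: S_def)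
  qed
  have pow_bound: "(2::real)^k < 2 / s j" if "j \<le> k" "k < j'" for k
  proof -
    have "s k \<le> (1/2)^k" using sle that jj' by auto
    then have "(2::real)^k * s k \<le> (2::real)^k * (1/2)^k" by (intro mult_left_mono) auto
    also have "\<dots> = 1" by (simp add: power_mult_distrib[symmetric])
    finally have "(2::real)^k * s k \<le> 1" .
    moreover have "(2::real)^k * (s j / 2) < (2::real)^k * s k"
      using between[OF that] by (intro mult_strict_left_mono) auto
    ultimately have "(2::real)^k * (s j / 2) < 1" by linarith
    moreover have "(2::real)^k * s j = 2 * ((2::real)^k * (s j / 2))" by simp
    ultimately have "(2::real)^k * s j < 2" by linarith
    then show ?thesis using sj by (simp add: field_simps)
  qed
  have first: "(\<Sum>k\<in>{j..<j'}. 2^k * a k) \<le> 4 * (a j / s j)"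
  proof -
    have "(\<Sum>k\<in>{j..<j'}. 2^k * a k) \<le> (\<Sum>k\<in>{j..<j'}. 2^k * a j)"
      using amono jj' by (intro sum_mono mult_left_mono) auto
    also have "\<dots> = a j * (\<Sum>k\<in>{j..<j'}. (2::real)^k)" by (simp add: sum_distrib_left mult.commute)
    also have "\<dots> \<le> a j * (\<Sum>k<j'. (2::real)^k)"
      using anonneg less by (intro mult_left_mono sum_mono2) auto
    also have "\<dots> \<le> a j * (2^j')"
      using anonneg less by (intro mult_left_mono) (auto simp: geom2)
    also have "\<dots> \<le> a j * (4 / s j)"
    proof -
      have "(2::real)^(j'-1) < 2 / s j" using pow_bound[of "j'-1"] jj' by auto
      moreover have "(2::real)^j' = 2 * 2^(j'-1)" using jj' by (cases j') auto
      ultimately have "(2::real)^j' \<le> 4 / s j" by simp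
      then show ?thesis using anonneg less by (intro mult_left_mono) auto
    qed
    also have "\<dots> = 4 * (a j / s j)" by simp
    finally show ?thesis .
  qed
  show ?case
  proof (cases "j' = N")
    case True
    then have "(\<Sum>k\<in>{j..<N}. 2^k * a k) \<le> 4 * (a j / s j)" using first by simp
    moreover have "0 \<le> \<Phi> (s j) - B1" using Plow less by auto
    ultimately show ?thesis by (smt (verit))
  next
    case False
    then have j'N: "j' < N" using jj' by auto
    then have "S \<noteq> {}" by (auto simp: j'_def split: if_splits)
    then have "j' \<in> S" using Min_in[OF finS] by (simp add: j'_def)
    then have sj': "s j' \<le> s j / 2" by (simp add: S_def)
    have IH: "(\<Sum>k\<in>{j'..<N}. 2^k * a k) \<le> 4 * (a j' / s j') + 12 * (\<Phi> (s j') - B1)"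
      using less.hyps[of j'] jj' j'N by auto
    have lk: "a j' / (3 * s j') \<le> \<Phi> (s j) - \<Phi> (s j')" using link[OF less.prems j'N sj'] .
    have "4 * (a j' / s j') = 12 * (a j' / (3 * s j'))" by simp
    then have "4 * (a j' / s j') \<le> 12 * (\<Phi> (s j) - \<Phi> (s j'))" using lk by (smt (verit))
    moreover have "(\<Sum>k\<in>{j..<N}. 2^k * a k) = (\<Sum>k\<in>{j..<j'}. 2^k * a k) + (\<Sum>k\<in>{j'..<N}. 2^k * a k)"
      using jj' by (simp add: sum.atLeastLessThan_concat)
    ultimately show ?thesis using first IH by (smt (verit))
  qed
qed

lemma per_x_facts:
  fixes g :: "real \<Rightarrow> real" and h :: "real \<times> real \<Rightarrow> real" and x L Mh mg :: real
  assumes Lip: "\<And>p q. p \<in> {x-2..x+2} \<Longrightarrow> q \<in> {x-2..x+2} \<Longrightarrow> \<bar>g p - g q\<bar> \<le> L * \<bar>p - q\<bar>"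
  and L0: "0 \<le> L"
  and rows: "\<And>u. convex_on UNIV (\<lambda>s. h (s,u))"
  and cols: "\<And>s. convex_on UNIV (\<lambda>u. h (s,u))"
  and diag: "\<And>t. g t = h (t,t)"
  and Mh: "\<And>s u. s \<in> {x-2..x+2} \<Longrightarrow> u \<in> {x-2..x+2} \<Longrightarrow> h (s,u) \<le> Mh"
  and mg: "\<And>p. p \<in> {x-2..x+2} \<Longrightarrow> mg \<le> g p"
  defines "Phi \<equiv> (\<lambda>r. (h (x+r,x-r) + h (x-r,x+r) - 2 * g x) / r)"
  shows F1: "\<And>r. 0 \<le> r \<Longrightarrow> r \<le> 1 \<Longrightarrow> \<bar>omega g x r\<bar> \<le> 2*L*r"
    and F2: "\<And>r. 0 \<le> r \<Longrightarrow> r \<le> 1 \<Longrightarrow> -2*L \<le> Phi r"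
    and F3: "\<And>r. 0 \<le> r \<Longrightarrow> r \<le> 1 \<Longrightarrow> Phi r \<le> 2*L + 4 * max 0 (Mh - mg)"
    and F4: "\<And>r \<rho>. 0 < r \<Longrightarrow> 2*r \<le> \<rho> \<Longrightarrow> \<rho> \<le> 1 \<Longrightarrow> omega g x r \<le> 0 \<Longrightarrow> omega g x \<rho> \<le> 0 \<Longrightarrow>
             (- omega g x r) / (3*r) \<le> Phi \<rho> - Phi r"
proof -
  show F1: "\<And>r. 0 \<le> r \<Longrightarrow> r \<le> 1 \<Longrightarrow> \<bar>omega g x r\<bar> \<le> 2*L*r"
  proof -
    fix r :: real assume r: "0 \<le> r" "r \<le> 1"
    have "\<bar>g (x+r) - g x\<bar> \<le> L * \<bar>(x+r) - x\<bar>" using Lip[of "x+r" x] r by auto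
    moreover have "\<bar>g (x-r) - g x\<bar> \<le> L * \<bar>(x-r) - x\<bar>" using Lip[of "x-r" x] r by auto
    ultimately show "\<bar>omega g x r\<bar> \<le> 2*L*r" using r by (simp add: omega_def abs_if split: if_splits)
  qed
  show F2: "\<And>r. 0 \<le> r \<Longrightarrow> r \<le> 1 \<Longrightarrow> -2*L \<le> Phi r"
  proof -
    fix r :: real assume r: "0 \<le> r" "r \<le> 1"
    show "-2*L \<le> Phi r"
    proof (cases "r = 0")
      case True then show ?thesis using L0 by (simp add: Phi_def)
    next
      case False
      then have rp: "0 < r" using r by auto
      have c1: "(r - - r) * h (x + 0, x) \<le> (r - 0) * h (x + - r, x) + (0 - - r) * h (x + r, x)"
        using conv3x[OF rows[of x], of "-r" 0 r x] rp by simp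
      have c2: "(r - - r) * h (x+r, x + 0) \<le> (r - 0) * h (x+r, x + - r) + (0 - - r) * h (x+r, x + r)"
        using conv3x[OF cols[of "x+r"], of "-r" 0 r x] rp by simp
      have c3: "(r - - r) * h (x-r, x + 0) \<le> (r - 0) * h (x-r, x + - r) + (0 - - r) * h (x-r, x + r)"
        using conv3x[OF cols[of "x-r"], of "-r" 0 r x] rp by simp
      have "r * (-2*L) \<le> r * ((h (x+r,x-r) + h (x-r,x+r) - 2 * g x) / r)"
      proof -
        have "omega g x r \<le> 2*L*r" using F1[OF r] by (simp add: abs_le_iff)
        have d1: "r * (2 * h (x, x)) \<le> r * (h (x - r, x) + h (x + r, x))" using c1 by (simp add: algebra_simps)
        have d2: "r * (2 * h (x+r, x)) \<le> r * (h (x+r, x - r) + h (x+r, x + r))" using c2 by (simp add: algebra_simps)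
        have d3: "r * (2 * h (x-r, x)) \<le> r * (h (x-r, x - r) + h (x-r, x + r))" using c3 by (simp add: algebra_simps)
        have e1: "2 * h (x, x) \<le> h (x - r, x) + h (x + r, x)" using d1 rp by (simp add: mult_le_cancel_left_pos)
        have e2: "2 * h (x+r, x) \<le> h (x+r, x - r) + h (x+r, x + r)" using d2 rp by (simp add: mult_le_cancel_left_pos)
        have e3: "2 * h (x-r, x) \<le> h (x-r, x - r) + h (x-r, x + r)" using d3 rp by (simp add: mult_le_cancel_left_pos)
        have f0: "h (x+r,x+r) + h (x-r,x-r) - 2 * h (x,x) \<le> 2*L*r" using \<open>omega g x r \<le> 2*L*r\<close> by (simp add: omega_def diag)
        then have "r * (-2*L) \<le> h (x+r,x-r) + h (x-r,x+r) - 2 * g x"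
        proof -
          have "r * (-2*L) = -(2*L*r)" by simp
          then show ?thesis unfolding diag[of x] using e1 e2 e3 f0 by linarith
        qed
        then show ?thesis using rp by simp
      qed
      then have "r * (-2*L) \<le> h (x+r,x-r) + h (x-r,x+r) - 2 * g x" using rp by simp
      then show ?thesis using rp unfolding Phi_def by (subst pos_le_divide_eq) (auto simp: mult.commute)
    qed
  qed
  show F3: "\<And>r. 0 \<le> r \<Longrightarrow> r \<le> 1 \<Longrightarrow> Phi r \<le> 2*L + 4 * max 0 (Mh - mg)"
  proof -
    fix r :: real assume r: "0 \<le> r" "r \<le> 1"
    define B0 where "B0 = max 0 (Mh - mg)"
    have B0: "0 \<le> B0" "Mh - mg \<le> B0" by (auto simp: B0_def)
    show "Phi r \<le> 2*L + 4 * max 0 (Mh - mg)"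
    proof (cases "r = 0")
      case True then show ?thesis using L0 by (simp add: Phi_def)
    next
      case False
      then have rp: "0 < r" using r by auto
      have p1: "(1+r)*h (x+r,x-r) \<le> (1-r)*g (x-r) + 2*r*h (x+1,x-r)"
        using conv3x[OF rows[of "x-r"], of "-r" r 1 x] r rp by (simp add: diag algebra_simps)
      have q1: "(1+r)*h (x-r,x+r) \<le> 2*r*h (x-1,x+r) + (1-r)*g (x+r)"
        using conv3x[OF rows[of "x+r"], of "-1" "-r" r x] r rp by (simp add: diag algebra_simps)
      have z1: "h (x+1,x-r) - g (x-r) \<le> B0" using Mh[of "x+1" "x-r"] mg[of "x-r"] r B0 by auto
      have z2: "h (x-1,x+r) - g (x+r) \<le> B0" using Mh[of "x-1" "x+r"] mg[of "x+r"] r B0 by auto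
      have gen: "y \<le> 2*r*B0" if "(1+r)*y \<le> 2*r*(z - w)" "z - w \<le> B0" for y z w
      proof (cases "y \<le> 0")
        case True
        have "0 \<le> 2*r*B0" using rp B0 by simp
        then show ?thesis using True by linarith
      next
        case False
        have "2*r*(z-w) \<le> 2*r*B0" using that rp by (intro mult_left_mono) auto
        moreover have "y \<le> (1+r)*y" using False rp by (simp add: algebra_simps)
        ultimately show ?thesis using that by linarith
      qed
      have P: "h (x+r,x-r) - g (x-r) \<le> 2*r*B0"
        by (rule gen[OF _ z1]) (use p1 in \<open>simp add: algebra_simps\<close>)
      have Q: "h (x-r,x+r) - g (x+r) \<le> 2*r*B0"
        by (rule gen[OF _ z2]) (use q1 in \<open>simp add: algebra_simps\<close>)
      have l1: "g (x-r) - g x \<le> L*r" using Lip[of "x-r" x] r by auto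
      have l2: "g (x+r) - g x \<le> L*r" using Lip[of "x+r" x] r by auto
      have "h (x+r,x-r) + h (x-r,x+r) - 2 * g x \<le> r * (2*L + 4*B0)"
        using P Q l1 l2 by (simp add: algebra_simps)
      then show ?thesis using rp unfolding Phi_def B0_def[symmetric]
        by (subst pos_divide_le_eq) (auto simp: mult.commute)
    qed
  qed
  show F4: "\<And>r \<rho>. 0 < r \<Longrightarrow> 2*r \<le> \<rho> \<Longrightarrow> \<rho> \<le> 1 \<Longrightarrow> omega g x r \<le> 0 \<Longrightarrow> omega g x \<rho> \<le> 0 \<Longrightarrow>
             (- omega g x r) / (3*r) \<le> Phi \<rho> - Phi r"
  proof -
    fix r \<rho> :: real
    assume r: "0 < r" "2*r \<le> \<rho>" "\<rho> \<le> 1" and dr: "omega g x r \<le> 0" and dR: "omega g x \<rho> \<le> 0"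
    have h1: "(\<rho>+r)*h (x+r,x-r) \<le> (\<rho>-r)*g (x-r) + 2*r*h (x+\<rho>,x-r)"
      using conv3x[OF rows[of "x-r"], of "-r" r \<rho> x] r by (simp add: diag algebra_simps)
    have h2: "2*\<rho>*h (x+\<rho>,x-r) \<le> (\<rho>+r)*h (x+\<rho>,x-\<rho>) + (\<rho>-r)*g (x+\<rho>)"
      using conv3x[OF cols[of "x+\<rho>"], of "-\<rho>" "-r" \<rho> x] r by (simp add: diag algebra_simps)
    have h3: "(\<rho>+r)*h (x-r,x+r) \<le> 2*r*h (x-\<rho>,x+r) + (\<rho>-r)*g (x+r)"
      using conv3x[OF rows[of "x+r"], of "-\<rho>" "-r" r x] r by (simp add: diag algebra_simps)
    have h4: "2*\<rho>*h (x-\<rho>,x+r) \<le> (\<rho>-r)*g (x-\<rho>) + (\<rho>+r)*h (x-\<rho>,x+\<rho>)"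
      using conv3x[OF cols[of "x-\<rho>"], of "-\<rho>" r \<rho> x] r by (simp add: diag algebra_simps)
    have "(2*g x - g (x+r) - g (x-r)) / (3*r) \<le> (h (x+\<rho>,x-\<rho>) + h (x-\<rho>,x+\<rho>) - 2*g x)/\<rho> - (h (x+r,x-r) + h (x-r,x+r) - 2*g x)/r"
      by (rule link_alg2[OF r(1,2) h1 h2 h3 h4]) (use dr dR in \<open>auto simp: omega_def\<close>)
    moreover have eq: "- omega g x r = 2*g x - g (x+r) - g (x-r)" by (simp add: omega_def)
    ultimately show "(- omega g x r) / (3*r) \<le> Phi \<rho> - Phi r" unfolding Phi_def eq by simp
  qed
qed

lemma dyadic_cover:
  fixes t :: real assumes "0 < t" "t < 1"
  shows "\<exists>k. (1/2)^(k+1) \<le> t \<and> t < (1/2)^k"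
proof -
  obtain n where n: "1/t < 2^n" using real_arch_pow[of 2 "1/t"] by auto
  have "(1/2::real)^n < t" using n assms by (simp add: field_simps power_one_over)
  moreover have "(1/2::real)^(n+1) \<le> (1/2)^n" by (intro power_decreasing) auto
  ultimately have Pn: "(1/2::real)^(n+1) \<le> t" by linarith
  define k where "k = (LEAST k. (1/2::real)^(k+1) \<le> t)"
  have Pk: "(1/2::real)^(k+1) \<le> t" unfolding k_def by (rule LeastI[of _ n]) (rule Pn)
  have "t < (1/2)^k"
  proof (cases k)
    case 0 then show ?thesis using assms by simp
  next
    case (Suc j)
    then have "\<not> (1/2::real)^(j+1) \<le> t" using not_less_Least[of j "\<lambda>k. (1/2::real)^(k+1) \<le> t"]
      unfolding k_def by auto
    then show ?thesis using Suc by simp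
  qed
  then show ?thesis using Pk by blast
qed

lemma int_bound:
  fixes g :: "real \<Rightarrow> real" and Phi :: "real \<Rightarrow> real" and x L B2 :: real
  assumes gc: "continuous_on UNIV g" and L0: "0 \<le> L"
  and F1: "\<And>r. 0 \<le> r \<Longrightarrow> r \<le> 1 \<Longrightarrow> \<bar>omega g x r\<bar> \<le> 2*L*r"
  and F2: "\<And>r. 0 \<le> r \<Longrightarrow> r \<le> 1 \<Longrightarrow> -2*L \<le> Phi r"
  and F3: "\<And>r. 0 \<le> r \<Longrightarrow> r \<le> 1 \<Longrightarrow> Phi r \<le> B2"
  and F4: "\<And>r \<rho>. 0 < r \<Longrightarrow> 2*r \<le> \<rho> \<Longrightarrow> \<rho> \<le> 1 \<Longrightarrow> omega g x r \<le> 0 \<Longrightarrow> omega g x \<rho> \<le> 0 \<Longrightarrow>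
             (- omega g x r) / (3*r) \<le> Phi \<rho> - Phi r"
  shows "(\<integral>\<^sup>+ t \<in> {0<..<1}. ennreal (- omega_star g x t / t\<^sup>2) \<partial>lborel) \<le> ennreal (2 * (8*L + 12*(B2 + 2*L)))"
proof -
  define D where "D = omega g x"
  have Dc: "continuous_on UNIV D"
    unfolding D_def omega_def
    by (intro continuous_intros continuous_on_compose2[OF gc]) auto
  have D0: "D 0 = 0" by (simp add: D_def omega_def)
  define m where "m t = Inf (D ` {0..t})" for t
  have bdd: "bdd_below (D ` {0..t})" for t
    by (intro bounded_imp_bdd_below compact_imp_bounded compact_continuous_image continuous_on_subset[OF Dc]) auto
  have mle: "m t \<le> D s" if "0 \<le> s" "s \<le> t" for s t
    unfolding m_def using that by (intro cInf_lower bdd) auto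
  have attain: "\<exists>s\<in>{0..t}. D s = m t" if t0: "0 \<le> t" for t
  proof -
    have ex: "\<exists>s\<in>{0..t}. \<forall>y\<in>{0..t}. D s \<le> D y"
      using t0 by (intro continuous_attains_inf continuous_on_subset[OF Dc]) auto
    then obtain s where s: "s \<in> {0..t}" "\<forall>y\<in>{0..t}. D s \<le> D y" by blast
    have "m t = D s" unfolding m_def using s by (intro cInf_eq_minimum) auto
    then show ?thesis using s by auto
  qed
  have mmono: "m t \<le> m s" if "0 \<le> s" "s \<le> t" for s t
    unfolding m_def using that by (intro cInf_superset_mono bdd) auto
  have mnp: "m t \<le> 0" if "0 \<le> t" for t using mle[of 0 t] that D0 by simp
  have ostar: "m t \<le> omega_star g x t" if "0 \<le> t" for t
  proof -
    have mem: "m t \<in> {\<phi> t |\<phi>. antimono_on {0..} \<phi> \<and> (\<forall>s\<ge>0. \<phi> s \<le> omega g x s)}"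
    proof -
      have "antimono_on {0..} m" by (auto intro!: monotone_onI mmono)
      moreover have "\<forall>s\<ge>0. m s \<le> omega g x s" using mle D_def by auto
      ultimately show ?thesis by blast
    qed
    have "bdd_above {\<phi> t |\<phi>. antimono_on {0..} \<phi> \<and> (\<forall>s\<ge>0. \<phi> s \<le> omega g x s)}"
      using that by (intro bdd_aboveI[of _ "omega g x t"]) auto
    then show ?thesis unfolding omega_star_def using mem by (rule cSup_upper[rotated])
  qed
  define a where "a k = - m ((1/2)^k)" for k :: nat
  define s where "s k = (SOME s. s \<in> {0..(1/2::real)^k} \<and> D s = m ((1/2)^k))" for k :: nat
  have s: "s k \<in> {0..(1/2)^k} \<and> D (s k) = - a k" for k
  proof -
    have "\<exists>s. s \<in> {0..(1/2::real)^k} \<and> D s = m ((1/2)^k)" using attain[of "(1/2)^k"] by auto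
    from someI_ex[OF this] show ?thesis unfolding s_def a_def by simp
  qed
  have a0: "0 \<le> a k" for k using mnp[of "(1/2)^k"] by (simp add: a_def)
  have amono: "a k \<le> a j" if "j \<le> k" for j k
  proof -
    have "(1/2::real)^k \<le> (1/2)^j" using that by (intro power_decreasing) auto
    then show ?thesis unfolding a_def using mmono[of "(1/2)^k" "(1/2)^j"] by simp
  qed
  define Cc where "Cc = 8*L + 12*(B2 + 2*L)"
  have Cc0: "0 \<le> Cc" using F2[of 1] F3[of 1] L0 by (simp add: Cc_def)
  have sk1: "s k \<le> 1" for k
  proof -
    have "(1/2::real)^k \<le> 1" by (intro power_le_one) auto
    then show ?thesis using s[of k] by auto
  qed
  have sk0: "0 \<le> s k" for k using s[of k] by auto
  have psum: "(\<Sum>k<N. 2^k * a k) \<le> Cc" for N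
  proof -
    define Z where "Z = {k. k < N \<and> a k = 0}"
    have finZ: "finite Z" by (simp add: Z_def)
    define N' where "N' = (if Z = {} then N else Min Z)"
    have N'N: "N' \<le> N"
    proof (cases "Z = {}")
      case True then show ?thesis by (simp add: N'_def)
    next
      case False then have "Min Z \<in> Z" using Min_in[OF finZ] by auto
      moreover have "N' = Min Z" using False by (simp add: N'_def)
      ultimately show ?thesis unfolding Z_def by auto
    qed
    have apos: "0 < a k" if "k < N'" for k
    proof -
      have "k \<notin> Z"
      proof
        assume "k \<in> Z"
        then have "Z \<noteq> {}" "Min Z \<le> k" using Min_le[OF finZ] by auto
        then show False using that by (simp add: N'_def)
      qed
      then have "a k \<noteq> 0" using that N'N by (simp add: Z_def)
      then show ?thesis using a0[of k] by simp
    qed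
    have azero: "a k = 0" if "N' \<le> k" "k < N" for k
    proof -
      have "Z \<noteq> {}" using that by (auto simp: N'_def split: if_splits)
      then have "Min Z \<in> Z" using Min_in[OF finZ] by auto
      moreover have "N' = Min Z" using \<open>Z \<noteq> {}\<close> by (simp add: N'_def)
      ultimately have "a N' = 0" unfolding Z_def by auto
      then show ?thesis using amono[OF that(1)] a0[of k] by simp
    qed
    have split: "(\<Sum>k<N. 2^k * a k) = (\<Sum>k\<in>{0..<N'}. 2^k * a k)"
    proof -
      have "(\<Sum>k<N. 2^k * a k) = (\<Sum>k\<in>{0..<N}. 2^k * a k)" by (simp add: atLeast0LessThan)
      also have "\<dots> = (\<Sum>k\<in>{0..<N'}. 2^k * a k) + (\<Sum>k\<in>{N'..<N}. 2^k * a k)"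
        using N'N by (simp add: sum.atLeastLessThan_concat)
      also have "(\<Sum>k\<in>{N'..<N}. 2^k * a k) = 0" using azero by (intro sum.neutral) auto
      finally show ?thesis by simp
    qed
    show ?thesis
    proof (cases "N' = 0")
      case True then show ?thesis using split Cc0 by simp
    next
      case False
      have spos: "0 < s k" if "k < N'" for k
      proof -
        have "s k \<noteq> 0" using s[of k] apos[OF that] D0 by auto
        then show ?thesis using sk0[of k] by simp
      qed
      have main: "(\<Sum>k\<in>{0..<N'}. 2^k * a k) \<le> 4 * (a 0 / s 0) + 12 * (Phi (s 0) - (-2*L))"
      proof (rule comb[of N' s a "-2*L" Phi 0])
        show "\<And>k. k < N' \<Longrightarrow> 0 < s k" by (rule spos)
        show "\<And>k. k < N' \<Longrightarrow> s k \<le> (1/2)^k" using s by auto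
        show "\<And>k. k < N' \<Longrightarrow> 0 \<le> a k" by (rule a0)
        show "\<And>j k. j \<le> k \<Longrightarrow> k < N' \<Longrightarrow> a k \<le> a j" by (rule amono)
        show "\<And>k. k < N' \<Longrightarrow> -2*L \<le> Phi (s k)" using F2 sk0 sk1 by auto
        show "\<And>i k. i < N' \<Longrightarrow> k < N' \<Longrightarrow> s k \<le> s i / 2 \<Longrightarrow> a k / (3 * s k) \<le> Phi (s i) - Phi (s k)"
        proof -
          fix i k assume ik: "i < N'" "k < N'" "s k \<le> s i / 2"
          have "(- omega g x (s k)) / (3 * s k) \<le> Phi (s i) - Phi (s k)"
            using F4[of "s k" "s i"] spos[OF ik(2)] ik(3) sk1[of i] s[of k] s[of i] a0[of k] a0[of i]
            by (auto simp: D_def)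
          then show "a k / (3 * s k) \<le> Phi (s i) - Phi (s k)" using s[of k] by (simp add: D_def)
        qed
        show "0 < N'" using False by simp
      qed
      have "a 0 \<le> 2*L * s 0" using F1[OF sk0 sk1, of 0] s[of 0] by (simp add: D_def abs_le_iff)
      then have "a 0 / s 0 \<le> 2*L" using spos[of 0] False by (simp add: divide_le_eq)
      moreover have "Phi (s 0) \<le> B2" using F3[OF sk0 sk1] .
      ultimately show ?thesis using main split by (simp add: Cc_def)
    qed
  qed
  define A where "A k = {(1/2::real)^(k+1) ..< (1/2)^k}" for k :: nat
  define c where "c k = a k * (2^(k+1))^2" for k :: nat
  have c0: "0 \<le> c k" for k using a0[of k] by (simp add: c_def)
  have pw: "ennreal (- omega_star g x t / t\<^sup>2) * indicator {0<..<1} t \<le> (\<Sum>k. ennreal (c k) * indicator (A k) t)" for t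
  proof (cases "t \<in> {0<..<1}")
    case False then show ?thesis by simp
  next
    case True
    then have t0: "0 < t" "t < 1" by auto
    obtain k where k: "(1/2)^(k+1) \<le> t" "t < (1/2)^k" using dyadic_cover[OF t0] by blast
    have "- omega_star g x t \<le> - m t" using ostar[of t] t0 by simp
    also have "- m t \<le> - m ((1/2)^k)" using mmono[of t "(1/2)^k"] t0 k by simp
    also have "\<dots> = a k" by (simp add: a_def)
    finally have "- omega_star g x t / t\<^sup>2 \<le> a k / t\<^sup>2" by (intro divide_right_mono) auto
    also have "a k / t\<^sup>2 \<le> a k / ((1/2)^(k+1))\<^sup>2"
      using a0[of k] k by (intro divide_left_mono power_mono mult_pos_pos) auto
    also have "a k / ((1/2)^(k+1))\<^sup>2 = c k" by (simp add: c_def power_one_over)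
    finally have le: "- omega_star g x t / t\<^sup>2 \<le> c k" .
    have tA: "t \<in> A k" using k by (simp add: A_def)
    have "ennreal (- omega_star g x t / t\<^sup>2) * indicator {0<..<1} t \<le> ennreal (c k) * indicator (A k) t"
      using le True tA by (simp add: ennreal_leI)
    also have "\<dots> = (\<Sum>i\<in>{k}. ennreal (c i) * indicator (A i) t)" by (simp only: sum.insert[OF finite.emptyI] empty_iff sum.empty add_0_right not_False_eq_True)
    also have "\<dots> \<le> (\<Sum>i. ennreal (c i) * indicator (A i) t)"
      by (intro sum_le_suminf summableI) auto
    finally show ?thesis .
  qed
  have "(\<integral>\<^sup>+ t \<in> {0<..<1}. ennreal (- omega_star g x t / t\<^sup>2) \<partial>lborel)
        \<le> (\<integral>\<^sup>+ t. (\<Sum>k. ennreal (c k) * indicator (A k) t) \<partial>lborel)"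
    by (rule nn_integral_mono) (rule pw)
  also have "\<dots> = (\<Sum>k. \<integral>\<^sup>+ t. ennreal (c k) * indicator (A k) t \<partial>lborel)"
    by (rule nn_integral_suminf) (simp add: A_def)
  also have "\<dots> = (\<Sum>k. ennreal (2^(k+1) * a k))"
  proof (rule suminf_cong)
    fix k
    have le: "(1/2::real)^(k+1) \<le> (1/2)^k" by (intro power_decreasing) auto
    have "(\<integral>\<^sup>+ t. ennreal (c k) * indicator (A k) t \<partial>lborel) = ennreal (c k) * emeasure lborel (A k)"
      by (rule nn_integral_cmult_indicator) (simp add: A_def)
    also have "\<dots> = ennreal (c k) * ennreal ((1/2)^k - (1/2)^(k+1))" using le by (simp add: A_def)
    also have "\<dots> = ennreal (c k * ((1/2)^k - (1/2)^(k+1)))" using c0[of k] le by (intro ennreal_mult[symmetric]) auto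
    also have "c k * ((1/2)^k - (1/2)^(k+1)) = 2^(k+1) * a k"
      by (simp add: c_def power_one_over field_simps power2_eq_square)
    finally show "(\<integral>\<^sup>+ t. ennreal (c k) * indicator (A k) t \<partial>lborel) = ennreal (2^(k+1) * a k)" .
  qed
  also have "\<dots> \<le> ennreal (2 * Cc)"
  proof (rule suminf_le_const[OF summableI])
    fix n
    have "(\<Sum>k<n. ennreal (2^(k+1) * a k)) = ennreal (\<Sum>k<n. 2^(k+1) * a k)"
      using a0 by (intro sum_ennreal) auto
    also have "(\<Sum>k<n. (2::real)^(k+1) * a k) = 2 * (\<Sum>k<n. 2^k * a k)"
      by (simp add: sum_distrib_left mult.assoc)
    also have "\<dots> \<le> 2 * Cc" using psum[of n] by simp
    finally show "(\<Sum>k<n. ennreal (2^(k+1) * a k)) \<le> ennreal (2 * Cc)" by (simp add: ennreal_leI)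
  qed
  finally show ?thesis by (simp add: Cc_def)
qed

theorem theorem4p2:
  fixes g :: "real \<Rightarrow> real" and h :: "real \<times> real \<Rightarrow> real" and I :: "real set"
  assumes "locally_lipschitz g"
    and "separately_convex h"
    and "\<forall>t. g t = h (t, t)"
    and "is_interval I" and "bounded I"
  shows "\<exists>C::real. \<forall>x\<in>I.
           (\<integral>\<^sup>+ t \<in> {0<..<1}. ennreal (- omega_star g x t / t\<^sup>2) \<partial>lborel) < ennreal C"
proof -
  note ll = assms(1)[unfolded locally_lipschitz_def]
  have rows: "\<And>u. convex_on UNIV (\<lambda>s. h (s,u))" and cols: "\<And>s. convex_on UNIV (\<lambda>u. h (s,u))"
    using assms(2) by (auto simp: separately_convex_def)
  have diag: "\<And>t. g t = h (t,t)" using assms(3) by auto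
  obtain R0 where R0: "\<forall>x\<in>I. norm x \<le> R0" using assms(5) by (auto simp: bounded_iff)
  define R where "R = max R0 0"
  have R: "\<And>x. x \<in> I \<Longrightarrow> \<bar>x\<bar> \<le> R" "0 \<le> R" using R0 by (auto simp: R_def)
  define c where "c = -R-3"
  define d where "d = R+3"
  have gcont: "continuous_on UNIV g"
  proof (rule continuous_at_imp_continuous_on, intro ballI)
    fix y :: real
    obtain U L' where U: "open U" "y \<in> U" "L'-lipschitz_on U g" using ll by blast
    have "continuous_on U g" using U(3) by (rule lipschitz_on_continuous_on)
    then show "isCont g y" using U(1,2) continuous_on_eq_continuous_at by blast
  qed
  have lloc: "local_lipschitz {0::real} {c..d} (\<lambda>_. g)"
    unfolding local_lipschitz_def
  proof (intro ballI)
    fix y t assume "y \<in> {c..d}" "t \<in> {0::real}"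
    obtain U L' where U: "open U" "y \<in> U" "L'-lipschitz_on U g" using ll by blast
    obtain e where e: "e > 0" "cball y e \<subseteq> U" using U(1,2) open_contains_cball by blast
    have "L'-lipschitz_on (cball y e \<inter> {c..d}) g" using lipschitz_on_subset[OF U(3)] e(2) by blast
    then show "\<exists>u>0. \<exists>L. \<forall>t\<in>cball t u \<inter> {0}. L-lipschitz_on (cball y u \<inter> {c..d}) g"
      using e(1) by blast
  qed
  obtain L where L: "L-lipschitz_on {c..d} g"
    using local_lipschitz_compact_implies_lipschitz[OF lloc compact_Icc compact_sing[of "0::real"]] by auto
  have L0: "0 \<le> L" using L by (rule lipschitz_on_nonneg)
  have Lip: "\<bar>g p - g q\<bar> \<le> L * \<bar>p - q\<bar>" if "p \<in> {c..d}" "q \<in> {c..d}" for p q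
    using lipschitz_onD[OF L that] by (simp add: dist_real_def)
  define Mh where "Mh = max (max (h (c,c)) (h (c,d))) (max (h (d,c)) (h (d,d)))"
  have Mh: "h (s,u) \<le> Mh" if "s \<in> {c..d}" "u \<in> {c..d}" for s u
  proof -
    have cv: "convex_on {c..d} f" if "convex_on UNIV f" for f :: "real \<Rightarrow> real"
      using that by (rule convex_on_subset) auto
    have "h (s,u) \<le> max (h (c,u)) (h (d,u))"
      using convex_on_le_max[OF cv[OF rows[of u]] that(1)] by simp
    moreover have "h (c,u) \<le> max (h (c,c)) (h (c,d))"
      using convex_on_le_max[OF cv[OF cols[of c]] that(2)] by simp
    moreover have "h (d,u) \<le> max (h (d,c)) (h (d,d))"
      using convex_on_le_max[OF cv[OF cols[of d]] that(2)] by simp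
    ultimately show ?thesis unfolding Mh_def by linarith
  qed
  define mg where "mg = g 0 - L * (R+3)"
  have mg: "mg \<le> g p" if "p \<in> {c..d}" for p
  proof -
    have "\<bar>g p - g 0\<bar> \<le> L * \<bar>p - 0\<bar>" using Lip[OF that, of 0] R(2) by (simp add: c_def d_def)
    moreover have "L * \<bar>p - 0\<bar> \<le> L * (R+3)" using that L0 by (intro mult_left_mono) (auto simp: c_def d_def)
    ultimately show ?thesis unfolding mg_def by linarith
  qed
  define B2 where "B2 = 2*L + 4 * max 0 (Mh - mg)"
  define C where "C = 2 * (8*L + 12*(B2 + 2*L)) + 1"
  show ?thesis
  proof (intro exI[of _ C] ballI)
    fix x assume xI: "x \<in> I"
    have sub: "{x-2..x+2} \<subseteq> {c..d}" using R(1)[OF xI] by (auto simp: c_def d_def)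
    have Lx: "\<And>p q. p \<in> {x-2..x+2} \<Longrightarrow> q \<in> {x-2..x+2} \<Longrightarrow> \<bar>g p - g q\<bar> \<le> L * \<bar>p - q\<bar>"
      using Lip sub by blast
    have Mhx: "\<And>s u. s \<in> {x-2..x+2} \<Longrightarrow> u \<in> {x-2..x+2} \<Longrightarrow> h (s,u) \<le> Mh" using Mh sub by blast
    have mgx: "\<And>p. p \<in> {x-2..x+2} \<Longrightarrow> mg \<le> g p" using mg sub by blast
    note facts = per_x_facts[of x g L h Mh mg, OF Lx L0 rows cols diag Mhx mgx]
    have bound: "(\<integral>\<^sup>+ t \<in> {0<..<1}. ennreal (- omega_star g x t / t\<^sup>2) \<partial>lborel) \<le> ennreal (2 * (8*L + 12*(B2 + 2*L)))"
    proof (rule int_bound[OF gcont L0, where Phi = "\<lambda>r. (h (x+r,x-r) + h (x-r,x+r) - 2 * g x) / r"])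
      show "\<And>r. 0 \<le> r \<Longrightarrow> r \<le> 1 \<Longrightarrow> \<bar>omega g x r\<bar> \<le> 2*L*r" by (rule facts(1))
      show "\<And>r. 0 \<le> r \<Longrightarrow> r \<le> 1 \<Longrightarrow> -2*L \<le> (h (x+r,x-r) + h (x-r,x+r) - 2 * g x) / r"
        by (rule facts(2))
      show "\<And>r. 0 \<le> r \<Longrightarrow> r \<le> 1 \<Longrightarrow> (h (x+r,x-r) + h (x-r,x+r) - 2 * g x) / r \<le> B2"
        unfolding B2_def by (rule facts(3))
      show "\<And>r \<rho>. 0 < r \<Longrightarrow> 2*r \<le> \<rho> \<Longrightarrow> \<rho> \<le> 1 \<Longrightarrow> omega g x r \<le> 0 \<Longrightarrow> omega g x \<rho> \<le> 0 \<Longrightarrow>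
             (- omega g x r) / (3*r) \<le> (h (x+\<rho>,x-\<rho>) + h (x-\<rho>,x+\<rho>) - 2 * g x) / \<rho> - (h (x+r,x-r) + h (x-r,x+r) - 2 * g x) / r"
        by (rule facts(4))
    qed
    have "0 \<le> B2" using L0 by (simp add: B2_def)
    then have "ennreal (2 * (8*L + 12*(B2 + 2*L))) < ennreal C"
      using L0 by (subst ennreal_less_iff) (auto simp: C_def)
    with bound show "(\<integral>\<^sup>+ t \<in> {0<..<1}. ennreal (- omega_star g x t / t\<^sup>2) \<partial>lborel) < ennreal C"
      by (rule le_less_trans)
  qed
qed

end
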